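(* Under the hypotheses of Lemma 3 (namely: $\mathscr{A}=\{A_1,\ldots,A_r\}$ an irreducible set of real $d\times d$ matrices, $\|\cdot\|$ a norm on $\mathbb{R}^d$, integers $p\ge d-1$, $n\ge1$, a number $\mu>1$, matrices $A_{i_1},\ldots,A_{i_n}\in\mathscr{A}$ and nonzero $x_*\in\mathbb{R}^d$ with $\|A_{i_n}\cdots A_{i_1}x_*\|\ge \mu\,\eta_p(\mathscr{A})\,\rho(\mathscr{A})^n\|x_*\|$, where $\eta_p(\mathscr{A})=\max\{1,\rho(\mathscr{A})^p\}/\chi_p(\mathscr{A})$), and with $\eta=\mu^{1/(n+p)}$, there exists a sequence $H_k\in\mathscr{A}_\infty$, $k=0,1,\ldots$, such that $\mathrm{len}(H_k)\to\infty$ as $k\to\infty$ and \[ \|H_k\|\ge\big(\eta\,\rho(\mathscr{A})\big)^{\mathrm{len}(H_k)},\qquad k=0,1,\ldots. \]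
   Context: Irreducible: the matrices in $\mathscr{A}$ have no common invariant subspace other than $\{0\}$ and $\mathbb{R}^d$. $\mathscr{A}^k$ is the set of products of $k$ matrices from $\mathscr{A}$, $\mathscr{A}^0=\{I\}$; matrices carry the induced operator norm, $\|\mathscr{A}^n\|=\max_{A\in\mathscr{A}^n}\|A\|$, and $\rho(\mathscr{A})=\limsup_{n\to\infty}\|\mathscr{A}^n\|^{1/n}$. $\mathscr{A}_\infty=\bigcup_{k\ge1}\mathscr{A}^k$, elements regarded as products of factors from $\mathscr{A}$ whose number of factors is the length $\mathrm{len}$. $\mathscr{A}_p=\bigcup_{k=0}^p\mathscr{A}^k$, $\mathscr{A}_p(x)=\{Ax:A\in\mathscr{A}_p\}$, $\mathbf{S}(t)$ the closed $\|\cdot\|$-ball of radius $t$ about $0$, and $\chi_p(\mathscr{A})=\inf_{\|x\|=1}\sup\{t\ge0:\mathbf{S}(t)\subseteq\mathrm{conv}(\mathscr{A}_p(x)\cup\mathscr{A}_p(-x))\}$ is the $p$-measure of irreducibility. *)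

theory Defs
  imports "HOL-Analysis.Analysis" "HOL-Library.Liminf_Limsup"
begin

text \<open>Vectors in R^d are real^'d, d x d matrices real^'d^'d (d = CARD('d)).
  An arbitrary norm N on R^d is given explicitly as a function.\<close>

definition is_norm :: "(real^'d \<Rightarrow> real) \<Rightarrow> bool" where
  "is_norm N \<longleftrightarrow> (\<forall>x. 0 \<le> N x) \<and> (\<forall>x. N x = 0 \<longleftrightarrow> x = 0) \<and>
     (\<forall>c x. N (c *\<^sub>R x) = \<bar>c\<bar> * N x) \<and> (\<forall>x y. N (x + y) \<le> N x + N y)"

definition opnorm :: "(real^'d \<Rightarrow> real) \<Rightarrow> real^'d^'d \<Rightarrow> real" where
  "opnorm N A = Sup {N (A *v x) | x. N x = 1}"

definition irreducible_set :: "(real^'d^'d) set \<Rightarrow> bool" where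
  "irreducible_set \<A> \<longleftrightarrow>
     (\<forall>V. subspace V \<and> (\<forall>A\<in>\<A>. \<forall>v\<in>V. A *v v \<in> V) \<longrightarrow> V = {0} \<or> V = UNIV)"

definition mprod :: "(real^'d^'d) list \<Rightarrow> real^'d^'d" where
  "mprod Bs = foldr (**) Bs (mat 1)"

definition prods :: "(real^'d^'d) set \<Rightarrow> nat \<Rightarrow> (real^'d^'d) set" where
  "prods \<A> k = {mprod Bs | Bs. length Bs = k \<and> set Bs \<subseteq> \<A>}"

definition prods_upto :: "(real^'d^'d) set \<Rightarrow> nat \<Rightarrow> (real^'d^'d) set" where
  "prods_upto \<A> p = (\<Union>k\<le>p. prods \<A> k)"

definition setnorm :: "(real^'d \<Rightarrow> real) \<Rightarrow> (real^'d^'d) set \<Rightarrow> nat \<Rightarrow> real" where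
  "setnorm N \<A> n = Max (opnorm N ` prods \<A> n)"

definition jsr :: "(real^'d \<Rightarrow> real) \<Rightarrow> (real^'d^'d) set \<Rightarrow> real" where
  "jsr N \<A> = real_of_ereal (limsup (\<lambda>n. ereal (setnorm N \<A> n powr (1 / real n))))"

definition chi :: "(real^'d \<Rightarrow> real) \<Rightarrow> (real^'d^'d) set \<Rightarrow> nat \<Rightarrow> real" where
  "chi N \<A> p = Inf ((\<lambda>x. Sup {t. 0 \<le> t \<and>
        {y. N y \<le> t} \<subseteq> convex hull ((\<lambda>A. A *v x) ` prods_upto \<A> p \<union>
                                       (\<lambda>A. A *v (- x)) ` prods_upto \<A> p)})
      ` {x. N x = 1})"

definition eta_p :: "(real^'d \<Rightarrow> real) \<Rightarrow> (real^'d^'d) set \<Rightarrow> nat \<Rightarrow> real" where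
  "eta_p N \<A> p = max 1 (jsr N \<A> ^ p) / chi N \<A> p"

end

theory Submission
  imports Defs
begin

lemma isnD:
  assumes "is_norm N"
  shows "0 \<le> N x" "N x = 0 \<longleftrightarrow> x = 0" "N (c *\<^sub>R x) = \<bar>c\<bar> * N x" "N (x + y) \<le> N x + N y"
  using assms unfolding is_norm_def by auto

lemma isn_zero: "is_norm N \<Longrightarrow> N 0 = 0"
  using isnD(2) by blast

lemma isn_neg: "is_norm N \<Longrightarrow> N (- x) = N x"
  using isnD(3)[of N "-1" x] by simp

lemma isn_diff: "is_norm N \<Longrightarrow> \<bar>N x - N y\<bar> \<le> N (x - y)"
proof -
  assume a: "is_norm N"
  have "N x \<le> N (x - y) + N y" using isnD(4)[OF a, of "x - y" y] by simp
  moreover have "N y \<le> N (y - x) + N x" using isnD(4)[OF a, of "y - x" x] by simp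
  moreover have "N (y - x) = N (x - y)" using isn_neg[OF a, of "x - y"] by simp
  ultimately show ?thesis by linarith
qed

lemma isn_sum: assumes "is_norm N" "finite S" shows "N (sum f S) \<le> (\<Sum>i\<in>S. N (f i))"
  using assms(2)
proof (induction S rule: finite_induct)
  case empty thus ?case by (simp add: isn_zero[OF assms(1)])
next
  case (insert a F)
  thus ?case using isnD(4)[OF assms(1), of "f a" "sum f F"] by simp
qed

lemma isn_upper:
  fixes N :: "real^'d \<Rightarrow> real"
  assumes "is_norm N"
  shows "\<exists>K>0. \<forall>x. N x \<le> K * norm x"
proof -
  define K where "K = (\<Sum>i\<in>UNIV. N (axis i (1::real))) + 1"
  have K0: "K > 0" unfolding K_def using isnD(1)[OF assms] by (simp add: sum_nonneg add_nonneg_pos)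
  have "N x \<le> K * norm x" for x
  proof -
    have "N x = N (\<Sum>i\<in>UNIV. (x $ i) *\<^sub>R axis i 1)"
      using basis_expansion[of x] by (simp add: scalar_mult_eq_scaleR)
    also have "\<dots> \<le> (\<Sum>i\<in>UNIV. N ((x $ i) *\<^sub>R axis i 1))" by (rule isn_sum[OF assms]) simp
    also have "\<dots> = (\<Sum>i\<in>UNIV. \<bar>x $ i\<bar> * N (axis i 1))" using isnD(3)[OF assms] by simp
    also have "\<dots> \<le> (\<Sum>i\<in>UNIV. norm x * N (axis i 1))"
      by (rule sum_mono, rule mult_right_mono[OF component_le_norm_cart isnD(1)[OF assms]])
    also have "\<dots> = norm x * (\<Sum>i\<in>UNIV. N (axis i 1))" by (simp add: sum_distrib_left)
    also have "\<dots> \<le> K * norm x" unfolding K_def by (simp add: algebra_simps)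
    finally show ?thesis .
  qed
  thus ?thesis using K0 by blast
qed

lemma isn_cont:
  fixes N :: "real^'d \<Rightarrow> real"
  assumes "is_norm N"
  shows "continuous_on S N"
proof -
  obtain K where K: "K > 0" "\<And>x. N x \<le> K * norm x" using isn_upper[OF assms] by blast
  show ?thesis unfolding continuous_on_iff
  proof (intro ballI allI impI)
    fix x e assume "x \<in> S" "(e::real) > 0"
    show "\<exists>d>0. \<forall>x'\<in>S. dist x' x < d \<longrightarrow> dist (N x') (N x) < e"
    proof (intro exI[of _ "e / K"] conjI ballI impI)
      show "e / K > 0" using K \<open>e > 0\<close> by simp
      fix x' assume "dist x' x < e / K"
      have "dist (N x') (N x) \<le> N (x' - x)" unfolding dist_real_def using isn_diff[OF assms] .
      also have "\<dots> \<le> K * norm (x' - x)" using K by simp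
      also have "\<dots> < K * (e / K)" using \<open>dist x' x < e / K\<close> K by (intro mult_strict_left_mono) (auto simp: dist_norm)
      also have "\<dots> = e" using K by simp
      finally show "dist (N x') (N x) < e" .
    qed
  qed
qed

lemma isn_lower:
  fixes N :: "real^'d \<Rightarrow> real"
  assumes "is_norm N"
  shows "\<exists>k>0. \<forall>x. k * norm x \<le> N x"
proof -
  have "compact (sphere (0::real^'d) 1)" by simp
  moreover have "sphere (0::real^'d) 1 \<noteq> {}" by (simp add: sphere_def)
    (metis norm_axis_1)
  ultimately obtain x0 where x0: "x0 \<in> sphere 0 1" "\<And>y. y \<in> sphere 0 1 \<Longrightarrow> N x0 \<le> N y"
    using continuous_attains_inf[OF _ _ isn_cont[OF assms]] by metis
  have "x0 \<noteq> 0" using x0(1) by auto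
  hence k0: "N x0 > 0" using isnD(1,2)[OF assms, of x0] by auto
  have "N x0 * norm x \<le> N x" for x
  proof (cases "x = 0")
    case True thus ?thesis by (simp add: isn_zero[OF assms])
  next
    case False
    hence "(1 / norm x) *\<^sub>R x \<in> sphere 0 1" by simp
    hence "N x0 \<le> N ((1 / norm x) *\<^sub>R x)" using x0(2) by blast
    also have "\<dots> = N x / norm x" using isnD(3)[OF assms] by simp
    finally show ?thesis using False by (simp add: field_simps)
  qed
  thus ?thesis using k0 by blast
qed


lemma mprod_Nil[simp]: "mprod [] = mat 1" unfolding mprod_def by simp
lemma mprod_Cons[simp]: "mprod (A # Bs) = A ** mprod Bs" unfolding mprod_def by simp
lemma mprod_append: "mprod (xs @ ys) = mprod xs ** mprod ys"
  by (induction xs) (auto simp: matrix_mul_assoc)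

lemma prods_upto_iff:
  "M \<in> prods_upto \<A> p \<longleftrightarrow> (\<exists>Bs. length Bs \<le> p \<and> set Bs \<subseteq> \<A> \<and> M = mprod Bs)"
  unfolding prods_upto_def prods_def by auto

lemma prods_upto_eq: "prods_upto \<A> p = mprod ` {Bs. set Bs \<subseteq> \<A> \<and> length Bs \<le> p}"
  using prods_upto_iff by blast

lemma finite_prods_upto: "finite \<A> \<Longrightarrow> finite (prods_upto \<A> p)"
  unfolding prods_upto_eq using finite_lists_length_le by blast

lemma one_in_prods_upto: "mat 1 \<in> prods_upto \<A> p"
  unfolding prods_upto_iff by (intro exI[of _ "[]"]) simp

lemma prods_upto_mono: "k \<le> p \<Longrightarrow> prods_upto \<A> k \<subseteq> prods_upto \<A> p"
  unfolding prods_upto_def by (auto intro: le_trans)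

lemma prods_upto_Suc: "A \<in> \<A> \<Longrightarrow> M \<in> prods_upto \<A> k \<Longrightarrow> A ** M \<in> prods_upto \<A> (Suc k)"
proof -
  assume a: "A \<in> \<A>" "M \<in> prods_upto \<A> k"
  then obtain Bs where "length Bs \<le> k" "set Bs \<subseteq> \<A>" "M = mprod Bs" unfolding prods_upto_iff by blast
  thus ?thesis using a(1) unfolding prods_upto_iff by (intro exI[of _ "A # Bs"]) auto
qed

section \<open>Operator norm\<close>

lemma opnorm_bdd:
  fixes N :: "real^'d \<Rightarrow> real"
  assumes "is_norm N"
  shows "bdd_above {N (M *v x) | x. N x = 1}"
proof -
  obtain K where K: "K > 0" "\<And>x. N x \<le> K * norm x" using isn_upper[OF assms] by blast
  obtain k where k: "k > 0" "\<And>x. k * norm x \<le> N x" using isn_lower[OF assms] by blast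
  obtain B where B: "B > 0" "\<And>x. norm (M *v x) \<le> norm x * B"
    using bounded_linear.pos_bounded[OF matrix_vector_mul_bounded_linear[of M]] by blast
  have "N (M *v x) \<le> K * B / k" if "N x = 1" for x
  proof -
    have nx: "norm x \<le> 1 / k" using k(2)[of x] that k(1) by (simp add: field_simps)
    have "N (M *v x) \<le> K * norm (M *v x)" by (rule K(2))
    also have "\<dots> \<le> K * (norm x * B)" using B(2) K(1) by (simp add: mult_left_mono)
    also have "\<dots> \<le> K * ((1/k) * B)" using nx K(1) B(1) by (intro mult_left_mono mult_right_mono) auto
    finally show ?thesis by simp
  qed
  thus ?thesis unfolding bdd_above_def by blast
qed

lemma opnorm_ge:
  fixes N :: "real^'d \<Rightarrow> real"
  assumes "is_norm N" "x \<noteq> 0"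
  shows "N (M *v x) / N x \<le> opnorm N M"
proof -
  have nx: "N x > 0" using isnD(1,2)[OF assms(1), of x] assms(2) by auto
  define u where "u = (1 / N x) *\<^sub>R x"
  have u1: "N u = 1" unfolding u_def using isnD(3)[OF assms(1)] nx by simp
  have "N (M *v u) = N (M *v x) / N x"
    unfolding u_def using isnD(3)[OF assms(1)] nx by (simp add: matrix_vector_mult_scaleR)
  moreover have "N (M *v u) \<le> opnorm N M"
    unfolding opnorm_def using u1 by (intro cSup_upper[OF _ opnorm_bdd[OF assms(1)]]) blast
  ultimately show ?thesis by simp
qed

lemma opnorm_nonneg:
  fixes N :: "real^'d \<Rightarrow> real"
  assumes "is_norm N"
  shows "0 \<le> opnorm N M"
proof -
  have "(axis undefined 1 :: real^'d) \<noteq> 0" by (simp add: axis_eq_0_iff)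
  from opnorm_ge[OF assms this, of M] isnD(1)[OF assms] show ?thesis
    by (meson divide_nonneg_nonneg order_trans)
qed

lemma jsr_nonneg: "0 \<le> jsr N \<A>"
  unfolding jsr_def by (intro real_of_ereal_pos le_Limsup) (auto simp: powr_ge_zero)


section \<open>Spanning\<close>

lemma span_full:
  fixes \<A> :: "(real^'d^'d) set" and x :: "real^'d"
  assumes irr: "irreducible_set \<A>" and x0: "x \<noteq> 0" and p: "p \<ge> CARD('d) - 1"
  shows "span ((\<lambda>M. M *v x) ` prods_upto \<A> p) = UNIV"
proof -
  define V where "V k = (\<lambda>M. M *v x) ` prods_upto \<A> k" for k
  have xV: "x \<in> V k" for k unfolding V_def using one_in_prods_upto[of \<A> k]
    by (metis image_eqI matrix_vector_mul_lid)
  have Vmono: "k \<le> j \<Longrightarrow> V k \<subseteq> V j" for k j unfolding V_def using prods_upto_mono by blast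
  have inv: "span (V k) = UNIV" if eq: "span (V k) = span (V (Suc k))" for k
  proof -
    let ?U = "span (V k)"
    have "A *v v \<in> ?U" if A: "A \<in> \<A>" and v: "v \<in> ?U" for A v
    proof -
      have "A *v v \<in> (*v) A ` ?U" using v by blast
      also have "\<dots> = span ((*v) A ` V k)" by (rule span_linear_image[symmetric]) (rule matrix_vector_mul_linear)
      also have "\<dots> \<subseteq> span (V (Suc k))"
      proof (rule span_mono, rule subsetI)
        fix z assume "z \<in> (*v) A ` V k"
        then obtain M where M: "M \<in> prods_upto \<A> k" "z = A *v (M *v x)" unfolding V_def by blast
        hence "z = (A ** M) *v x" by (simp add: matrix_vector_mul_assoc)
        thus "z \<in> V (Suc k)" unfolding V_def using prods_upto_Suc[OF A M(1)] by blast
      qed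
      finally show ?thesis using eq by simp
    qed
    hence "?U = {0} \<or> ?U = UNIV" using irr unfolding irreducible_set_def by (simp add: subspace_span)
    moreover have "x \<in> ?U" using xV span_base by blast
    ultimately show ?thesis using x0 by blast
  qed
  have main: "span (V k) = UNIV \<or> k + 1 \<le> dim (V k)" for k
  proof (induction k)
    case 0
    have "dim {x} \<le> dim (V 0)" using xV[of 0] by (intro dim_subset) auto
    moreover have "dim {x} = 1" using x0 by (simp add: dim_singleton)
    ultimately show ?case by simp
  next
    case (Suc k)
    show ?case
    proof (cases "span (V k) = UNIV")
      case True
      hence "span (V (Suc k)) = UNIV" using span_mono[OF Vmono[of k "Suc k"]] by auto
      thus ?thesis by simp
    next
      case False
      with Suc.IH have d: "k + 1 \<le> dim (V k)" by simp
      have "span (V k) \<noteq> span (V (Suc k))" using inv False by blast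
      moreover have "span (V k) \<subseteq> span (V (Suc k))" using span_mono[OF Vmono[of k "Suc k"]] by simp
      ultimately have "dim (V k) < dim (V (Suc k))" by (intro dim_psubset) blast
      thus ?thesis using d by simp
    qed
  qed
  have "span (V (CARD('d) - 1)) = UNIV"
  proof -
    have "span (V (CARD('d) - 1)) = UNIV \<or> CARD('d) \<le> dim (V (CARD('d) - 1))"
      using main[of "CARD('d) - 1"] by simp
    moreover have "dim (V (CARD('d) - 1)) \<le> CARD('d)" using dim_subset_UNIV[of "V (CARD('d) - 1)"] by simp
    ultimately show ?thesis using dim_eq_full[of "V (CARD('d) - 1)"] by auto
  qed
  hence "span (V p) = UNIV" using span_mono[OF Vmono[OF p]] by auto
  thus ?thesis unfolding V_def .
qed


lemma aux_pos: "0 \<le> (a::real) \<Longrightarrow> 0 < 2*(a+1)"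
  by simp

lemma aux_frac: "0 \<le> (a::real) \<Longrightarrow> a / (2*(a+1)) < 1"
  by (simp add: divide_less_eq)

definition hullset :: "(real^'d^'d) set \<Rightarrow> nat \<Rightarrow> real^'d \<Rightarrow> (real^'d) set" where
  "hullset \<A> p x = convex hull ((\<lambda>A. A *v x) ` prods_upto \<A> p \<union> (\<lambda>A. A *v (- x)) ` prods_upto \<A> p)"

definition Tset :: "(real^'d \<Rightarrow> real) \<Rightarrow> (real^'d^'d) set \<Rightarrow> nat \<Rightarrow> real^'d \<Rightarrow> real set" where
  "Tset N \<A> p x = {t. 0 \<le> t \<and> {y. N y \<le> t} \<subseteq> hullset \<A> p x}"

lemma chi_eq: "chi N \<A> p = Inf ((\<lambda>x. Sup (Tset N \<A> p x)) ` {x. N x = 1})"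
  unfolding chi_def Tset_def hullset_def ..

lemma x_in_hullset: "x \<in> hullset \<A> p x" "- x \<in> hullset \<A> p x"
proof -
  have a: "mat 1 \<in> prods_upto \<A> p" by (rule one_in_prods_upto)
  have "x \<in> (\<lambda>A. A *v x) ` prods_upto \<A> p" using a by (metis image_eqI matrix_vector_mul_lid)
  moreover have "- x \<in> (\<lambda>A. A *v (- x)) ` prods_upto \<A> p" using a by (metis image_eqI matrix_vector_mul_lid)
  ultimately show "x \<in> hullset \<A> p x" "- x \<in> hullset \<A> p x" unfolding hullset_def
    by (auto intro: hull_inc)
qed

lemma zero_in_Tset:
  assumes "is_norm N" shows "0 \<in> Tset N \<A> p x"
proof -
  have "(1/2) *\<^sub>R x + (1/2) *\<^sub>R (- x) \<in> hullset \<A> p x"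
    using x_in_hullset[of x \<A> p] unfolding hullset_def
    by (intro convexD[OF convex_convex_hull]) auto
  hence "0 \<in> hullset \<A> p x" by simp
  moreover have "{y. N y \<le> 0} = {0}" using isnD(1,2)[OF assms] by (auto simp: isn_zero[OF assms] intro: antisym)
  ultimately show ?thesis unfolding Tset_def by auto
qed

lemma exists_unit:
  fixes N :: "real^'d \<Rightarrow> real"
  assumes "is_norm N" shows "\<exists>e. N e = 1"
proof -
  let ?a = "axis undefined 1 :: real^'d"
  have "?a \<noteq> 0" by (simp add: axis_eq_0_iff)
  hence "N ?a > 0" using isnD(1,2)[OF assms, of ?a] by auto
  hence "N ((1 / N ?a) *\<^sub>R ?a) = 1" using isnD(3)[OF assms] by simp
  thus ?thesis by blast
qed

lemma Tset_bdd:
  fixes N :: "real^'d \<Rightarrow> real"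
  assumes "is_norm N" "finite \<A>"
  shows "bdd_above (Tset N \<A> p x)"
proof -
  have "bounded (hullset \<A> p x)" unfolding hullset_def
    using finite_prods_upto[OF assms(2)] by (intro bounded_convex_hull finite_imp_bounded) auto
  then obtain R where R: "\<And>z. z \<in> hullset \<A> p x \<Longrightarrow> norm z \<le> R" unfolding bounded_iff by blast
  obtain e where e: "N e = 1" using exists_unit[OF assms(1)] by blast
  have e0: "e \<noteq> 0" using e isn_zero[OF assms(1)] by auto
  have "t \<le> R / norm e" if "t \<in> Tset N \<A> p x" for t
  proof -
    have t0: "0 \<le> t" and sub: "{y. N y \<le> t} \<subseteq> hullset \<A> p x" using that unfolding Tset_def by auto
    have "N (t *\<^sub>R e) = t" using isnD(3)[OF assms(1)] e t0 by simp
    hence "t *\<^sub>R e \<in> hullset \<A> p x" using sub by force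
    hence "norm (t *\<^sub>R e) \<le> R" using R by blast
    hence "t * norm e \<le> R" using t0 by simp
    thus ?thesis using e0 t0 by (simp add: field_simps)
  qed
  thus ?thesis unfolding bdd_above_def by blast
qed

lemma Sup_Tset_nonneg:
  assumes "is_norm N" "finite \<A>"
  shows "0 \<le> Sup (Tset N \<A> p x)"
  using cSup_upper[OF zero_in_Tset[OF assms(1)] Tset_bdd[OF assms]] .

lemma chi_le:
  assumes "is_norm N" "finite \<A>" "N v = 1"
  shows "chi N \<A> p \<le> Sup (Tset N \<A> p v)"
  unfolding chi_eq using assms(3) Sup_Tset_nonneg[OF assms(1,2)]
  by (intro cInf_lower) (auto simp: bdd_below_def intro!: exI[of _ 0])

lemma ball_in_hullset:
  fixes N :: "real^'d \<Rightarrow> real"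
  assumes "is_norm N" "finite \<A>" "0 < s" "s \<le> Sup (Tset N \<A> p v)" "N y \<le> s"
  shows "y \<in> hullset \<A> p v"
proof -
  have cl: "closed (hullset \<A> p v)" unfolding hullset_def
    using finite_prods_upto[OF assms(2)]
    by (intro compact_imp_closed finite_imp_compact_convex_hull) auto
  have "y \<in> closure (hullset \<A> p v)"
    unfolding closure_approachable
  proof (intro allI impI)
    fix e :: real assume e: "e > 0"
    define \<theta> where "\<theta> = 1 - min (1/2) (e / (2 * (norm y + 1)))"
    have "0 < 2 * (norm y + 1)" using aux_pos[OF norm_ge_zero[of y]] .
    hence "e / (2 * (norm y + 1)) > 0" using e by (intro divide_pos_pos)
    hence th: "1/2 \<le> \<theta>" "\<theta> < 1" unfolding \<theta>_def using e by (auto simp: min_def)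
    have "\<theta> * s < s" using th assms(3) by simp
    hence "\<theta> * s < Sup (Tset N \<A> p v)" using assms(4) by linarith
    then obtain t where t: "t \<in> Tset N \<A> p v" "\<theta> * s < t"
      using less_cSup_iff[OF _ Tset_bdd[OF assms(1,2)]] zero_in_Tset[OF assms(1)] by blast
    have "N (\<theta> *\<^sub>R y) = \<theta> * N y" using isnD(3)[OF assms(1)] th by simp
    also have "\<dots> \<le> \<theta> * s" using assms(5) th by (intro mult_left_mono) auto
    finally have "N (\<theta> *\<^sub>R y) \<le> t" using t by simp
    hence mem: "\<theta> *\<^sub>R y \<in> hullset \<A> p v" using t(1) unfolding Tset_def by auto
    have "dist (\<theta> *\<^sub>R y) y = norm ((1 - \<theta>) *\<^sub>R y)" by (simp add: dist_norm algebra_simps norm_minus_commute)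
    also have "\<dots> = (1 - \<theta>) * norm y" using th by simp
    also have "\<dots> \<le> (e / (2 * (norm y + 1))) * norm y"
      unfolding \<theta>_def by (intro mult_right_mono) auto
    also have "\<dots> < e"
    proof -
      have "(e / (2 * (norm y + 1))) * norm y = e * (norm y / (2 * (norm y + 1)))" by simp
      also have "norm y / (2 * (norm y + 1)) < 1"
        using aux_frac[OF norm_ge_zero[of y]] .
      hence "e * (norm y / (2 * (norm y + 1))) < e * 1" using e by (intro mult_strict_left_mono)
      finally show ?thesis by simp
    qed
    finally show "\<exists>z\<in>hullset \<A> p v. dist z y < e" using mem by blast
  qed
  thus ?thesis using cl by (simp add: closure_closed)
qed


section \<open>Positivity of chi\<close>

lemma mv_neg: "(A::real^'d^'d) *v (- x) = - (A *v x)"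
  using linear_neg[OF matrix_vector_mul_linear[of A]] by simp

lemma ball_sep:
  fixes x :: "real^'d"
  assumes fin: "finite \<A>" and r: "\<And>a. \<exists>M\<in>prods_upto \<A> p. r * norm a \<le> \<bar>a \<bullet> (M *v x)\<bar>"
    and y: "norm y \<le> r"
  shows "y \<in> hullset \<A> p x"
proof (rule ccontr)
  assume ny: "y \<notin> hullset \<A> p x"
  have cv: "convex (hullset \<A> p x)" unfolding hullset_def by simp
  have cl: "closed (hullset \<A> p x)" unfolding hullset_def
    using finite_prods_upto[OF fin]
    by (intro compact_imp_closed finite_imp_compact_convex_hull) auto
  obtain a b where ab: "a \<bullet> y < b" "\<And>z. z \<in> hullset \<A> p x \<Longrightarrow> b < a \<bullet> z"
    using separating_hyperplane_closed_point[OF cv cl ny] by blast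
  obtain M where M: "M \<in> prods_upto \<A> p" "r * norm a \<le> \<bar>a \<bullet> (M *v x)\<bar>" using r by blast
  have m1: "M *v x \<in> hullset \<A> p x" unfolding hullset_def using M(1) by (auto intro!: hull_inc)
  have m2: "- (M *v x) \<in> hullset \<A> p x" unfolding hullset_def using M(1)
    by (intro hull_inc) (auto simp: mv_neg intro!: image_eqI[of _ _ M])
  obtain z where z: "z \<in> hullset \<A> p x" "a \<bullet> z \<le> - (r * norm a)"
  proof (cases "a \<bullet> (M *v x) \<le> 0")
    case True thus ?thesis using that[OF m1] M(2) by auto
  next
    case False thus ?thesis using that[OF m2] M(2) by (auto simp: inner_minus_right)
  qed
  have "\<bar>a \<bullet> y\<bar> \<le> norm a * norm y" by (rule Cauchy_Schwarz_ineq2)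
  also have "\<dots> \<le> norm a * r" using y by (simp add: mult_left_mono)
  finally have "- (r * norm a) \<le> a \<bullet> y" by (simp add: mult.commute)
  thus False using z(2) ab(1) ab(2)[OF z(1)] by linarith
qed

lemma chi_pos:
  fixes \<A> :: "(real^'d^'d) set" and N :: "real^'d \<Rightarrow> real"
  assumes fin: "finite \<A>" and irr: "irreducible_set \<A>" and N: "is_norm N"
    and p: "p \<ge> CARD('d) - 1"
  shows "0 < chi N \<A> p"
proof -
  obtain K where K: "K > 0" "\<And>x. N x \<le> K * norm x" using isn_upper[OF N] by blast
  obtain k where k: "k > 0" "\<And>x. k * norm x \<le> N x" using isn_lower[OF N] by blast
  let ?Ap = "prods_upto \<A> p"
  have finAp: "finite ?Ap" by (rule finite_prods_upto[OF fin])
  have cardAp: "card ?Ap > 0" using finAp one_in_prods_upto[of \<A> p] card_gt_0_iff by blast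
  define S1 where "S1 = {x :: real^'d. N x = 1}"
  have S1ne: "S1 \<noteq> {}" unfolding S1_def using exists_unit[OF N] by blast
  have "closed S1" unfolding S1_def
    by (intro closed_Collect_eq isn_cont[OF N] continuous_on_const)
  moreover have "bounded S1" unfolding S1_def bounded_iff
  proof (intro exI[of _ "1 / k"] allI impI ballI)
    fix x assume "x \<in> {x. N x = 1}"
    thus "norm x \<le> 1 / k" using k(2)[of x] k(1) by (simp add: field_simps)
  qed
  ultimately have cS1: "compact S1" by (simp add: compact_eq_bounded_closed)
  define KK where "KK = sphere (0::real^'d) 1 \<times> S1"
  have cKK: "compact KK" unfolding KK_def using cS1 by (intro compact_Times) auto
  have KKne: "KK \<noteq> {}" unfolding KK_def using S1ne
    by (auto simp: sphere_def) (metis norm_axis_1)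
  define g where "g z = (\<Sum>M\<in>?Ap. \<bar>fst z \<bullet> (M *v snd z)\<bar>)" for z :: "(real^'d) \<times> (real^'d)"
  have cg: "continuous_on KK g" unfolding g_def
    by (intro continuous_intros bounded_linear.continuous_on[OF matrix_vector_mul_bounded_linear])
  obtain z0 where z0: "z0 \<in> KK" "\<And>z. z \<in> KK \<Longrightarrow> g z0 \<le> g z"
    using continuous_attains_inf[OF cKK KKne cg] by blast
  define m where "m = g z0"
  have m0: "m > 0"
  proof (rule ccontr)
    assume "\<not> m > 0"
    moreover have "m \<ge> 0" unfolding m_def g_def by (simp add: sum_nonneg)
    ultimately have "m = 0" by simp
    hence all0: "\<forall>M\<in>?Ap. fst z0 \<bullet> (M *v snd z0) = 0"
      unfolding m_def g_def using sum_nonneg_eq_0_iff[OF finAp] by (simp add: sum_nonneg_eq_0_iff[OF finAp])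
    have "snd z0 \<in> S1" using z0(1) unfolding KK_def by auto
    hence "snd z0 \<noteq> 0" unfolding S1_def using isn_zero[OF N] by auto
    hence sp: "span ((\<lambda>M. M *v snd z0) ` ?Ap) = UNIV" using span_full[OF irr _ p] by blast
    have "orthogonal (fst z0) (fst z0)"
      by (rule orthogonal_to_span[of _ "(\<lambda>M. M *v snd z0) ` ?Ap"]) (auto simp: sp orthogonal_def all0)
    hence "fst z0 = 0" by (simp add: orthogonal_def)
    moreover have "norm (fst z0) = 1" using z0(1) unfolding KK_def by auto
    ultimately show False by simp
  qed
  define r where "r = m / card ?Ap"
  have r0: "r > 0" unfolding r_def using m0 cardAp by simp
  have key: "\<exists>M\<in>?Ap. r * norm a \<le> \<bar>a \<bullet> (M *v x)\<bar>" if x: "x \<in> S1" for a x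
  proof (cases "a = 0")
    case True thus ?thesis using one_in_prods_upto[of \<A> p] by auto
  next
    case False
    define u where "u = (1 / norm a) *\<^sub>R a"
    have "(u, x) \<in> KK" unfolding KK_def u_def using x False by simp
    hence gm: "m \<le> g (u, x)" using z0(2) unfolding m_def by blast
    have "\<exists>M\<in>?Ap. r \<le> \<bar>u \<bullet> (M *v x)\<bar>"
    proof (rule ccontr)
      assume "\<not> ?thesis"
      hence "\<And>M. M \<in> ?Ap \<Longrightarrow> \<bar>u \<bullet> (M *v x)\<bar> < r" by auto
      hence "g (u, x) < of_nat (card ?Ap) * r" unfolding g_def
        by (intro sum_bounded_above_strict cardAp) auto
      also have "\<dots> = m" unfolding r_def using cardAp by simp
      finally show False using gm by simp
    qed
    then obtain M where M: "M \<in> ?Ap" "r \<le> \<bar>u \<bullet> (M *v x)\<bar>" by blast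
    have "\<bar>u \<bullet> (M *v x)\<bar> = \<bar>a \<bullet> (M *v x)\<bar> / norm a" unfolding u_def by (simp add: abs_mult)
    hence "r * norm a \<le> \<bar>a \<bullet> (M *v x)\<bar>" using mult_right_mono[OF M(2) norm_ge_zero[of a]] False
      by (simp add: field_simps)
    thus ?thesis using M(1) by blast
  qed
  have Sk: "k * r \<le> Sup (Tset N \<A> p x)" if x: "x \<in> S1" for x
  proof -
    have "k * r \<in> Tset N \<A> p x" unfolding Tset_def
    proof (intro CollectI conjI subsetI)
      show "0 \<le> k * r" using k(1) r0 by simp
      fix y assume "y \<in> {y. N y \<le> k * r}"
      hence "k * norm y \<le> k * r" using k(2)[of y] by simp
      hence "norm y \<le> r" using k(1) by simp
      thus "y \<in> hullset \<A> p x" by (rule ball_sep[OF fin key[OF x]])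
    qed
    thus ?thesis by (rule cSup_upper[OF _ Tset_bdd[OF N fin]])
  qed
  have "k * r \<le> chi N \<A> p" unfolding chi_eq
    by (rule cInf_greatest) (use S1ne Sk in \<open>auto simp: S1_def\<close>)
  moreover have "0 < k * r" using k(1) r0 by simp
  ultimately show ?thesis by linarith
qed


lemma arith_main:
  fixes \<mu> \<rho> c :: real
  assumes mu: "\<mu> > 1" and rho: "\<rho> \<ge> 0" and c: "c \<ge> \<mu> * max 1 (\<rho> ^ p) * \<rho> ^ n" and n: "n \<ge> 1"
    and L1: "j * n \<le> L" and L2: "L \<le> j * (n + p)"
  shows "(\<mu> powr (1 / real (n + p)) * \<rho>) ^ L \<le> c ^ j"
proof -
  define \<eta> where "\<eta> = \<mu> powr (1 / real (n + p))"
  define mx where "mx = max 1 (\<rho> ^ p)"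
  have eta1: "1 \<le> \<eta>" unfolding \<eta>_def using mu by (intro ge_one_powr_ge_zero) auto
  have "\<eta> ^ (n + p) = \<mu>" unfolding \<eta>_def using mu n
    by (subst powr_power) (auto simp: powr_one)
  have e1: "\<eta> ^ L \<le> \<mu> ^ j"
  proof -
    have "\<eta> ^ L \<le> \<eta> ^ (j * (n + p))" using eta1 L2 by (intro power_increasing)
    also have "\<dots> = (\<eta> ^ (n + p)) ^ j" by (metis power_mult mult.commute)
    also have "\<dots> = \<mu> ^ j" using \<open>\<eta> ^ (n + p) = \<mu>\<close> by simp
    finally show ?thesis .
  qed
  obtain e where e: "L = j * n + e" "e \<le> j * p" using L1 L2
    by (metis add_le_cancel_left add_mult_distrib2 le_Suc_ex)
  have mx1: "1 \<le> mx" unfolding mx_def by simp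
  have re: "\<rho> ^ e \<le> mx ^ j"
  proof (cases "\<rho> \<ge> 1")
    case True
    have "\<rho> ^ e \<le> \<rho> ^ (j * p)" using True e(2) by (intro power_increasing)
    also have "\<dots> = (\<rho> ^ p) ^ j" by (metis power_mult mult.commute)
    also have "\<dots> \<le> mx ^ j" unfolding mx_def using rho by (intro power_mono) auto
    finally show ?thesis .
  next
    case False
    hence "\<rho> ^ e \<le> 1" using rho by (intro power_le_one) auto
    also have "1 \<le> mx ^ j" using mx1 by (rule one_le_power)
    finally show ?thesis .
  qed
  have e2: "\<rho> ^ L \<le> (mx * \<rho> ^ n) ^ j"
  proof -
    have "\<rho> ^ L = (\<rho> ^ n) ^ j * \<rho> ^ e" unfolding e(1) by (metis power_add power_mult mult.commute)
    also have "\<dots> \<le> (\<rho> ^ n) ^ j * mx ^ j" using re rho by (intro mult_left_mono) auto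
    also have "\<dots> = (mx * \<rho> ^ n) ^ j" by (simp add: power_mult_distrib mult.commute)
    finally show ?thesis .
  qed
  have "(\<eta> * \<rho>) ^ L = \<eta> ^ L * \<rho> ^ L" by (simp add: power_mult_distrib)
  also have "\<dots> \<le> \<mu> ^ j * (mx * \<rho> ^ n) ^ j"
    using e1 e2 rho eta1 mu by (intro mult_mono) auto
  also have "\<dots> = (\<mu> * mx * \<rho> ^ n) ^ j" by (simp add: power_mult_distrib)
  also have "\<dots> \<le> c ^ j" using c rho mu mx1 unfolding mx_def by (intro power_mono) auto
  finally show ?thesis unfolding \<eta>_def .
qed


lemma hull_lin:
  assumes "linear f" "z \<in> convex hull S" "\<And>s. s \<in> S \<Longrightarrow> f s \<in> convex hull T"
  shows "f z \<in> convex hull T"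
proof -
  have "f z \<in> convex hull (f ` S)" by (rule in_convex_hull_linear_image[OF assms(1,2)])
  also have "\<dots> \<subseteq> convex hull T" using assms(3) by (intro hull_minimal) auto
  finally show ?thesis .
qed

lemma conv_N:
  fixes N :: "real^'d \<Rightarrow> real"
  assumes N: "is_norm N" and z: "z \<in> convex hull S"
  shows "\<exists>s\<in>S. N z \<le> N s"
proof (rule ccontr)
  assume "\<not> ?thesis"
  hence sub: "S \<subseteq> {w. N w < N z}" by auto
  have "convex {w. N w < N z}" unfolding convex_def
  proof (intro ballI allI impI)
    fix x y :: "real^'d" and u v :: real
    assume x: "x \<in> {w. N w < N z}" and y: "y \<in> {w. N w < N z}" and uv: "0 \<le> u" "0 \<le> v" "u + v = 1"
    have "N (u *\<^sub>R x + v *\<^sub>R y) \<le> u * N x + v * N y"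
      using isnD(4)[OF N, of "u *\<^sub>R x" "v *\<^sub>R y"] isnD(3)[OF N] uv by simp
    also have "\<dots> < N z"
    proof (cases "u = 0")
      case True thus ?thesis using uv y by simp
    next
      case False
      hence "u * N x < u * N z" using x uv by (intro mult_strict_left_mono) auto
      moreover have "v * N y \<le> v * N z" using y uv by (intro mult_left_mono) auto
      moreover have "u * N z + v * N z = N z" using uv(3) by (metis distrib_right mult_1)
      ultimately show ?thesis by linarith
    qed
    finally show "u *\<^sub>R x + v *\<^sub>R y \<in> {w. N w < N z}" by simp
  qed
  hence "convex hull S \<subseteq> {w. N w < N z}" using sub by (intro hull_minimal)
  thus False using z by auto
qed

theorem lemma4:
  fixes \<A> :: "(real^'d^'d) set" and N :: "real^'d \<Rightarrow> real"
    and p n :: nat and \<mu> :: real and As :: "(real^'d^'d) list" and xs :: "real^'d"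
  assumes "finite \<A>" and "irreducible_set \<A>" and "is_norm N"
    and "p \<ge> CARD('d) - 1" and "n \<ge> 1" and "\<mu> > 1"
    and "length As = n" and "set As \<subseteq> \<A>" and "xs \<noteq> 0"
    and "N (mprod (rev As) *v xs) \<ge> \<mu> * eta_p N \<A> p * jsr N \<A> ^ n * N xs"
  shows "\<exists>H :: nat \<Rightarrow> (real^'d^'d) list.
           (\<forall>k. H k \<noteq> [] \<and> set (H k) \<subseteq> \<A>) \<and>
           filterlim (\<lambda>k. length (H k)) at_top sequentially \<and>
           (\<forall>k. opnorm N (mprod (H k)) \<ge>
                 (\<mu> powr (1 / real (n + p)) * jsr N \<A>) ^ length (H k))"
proof -
  note fin = assms(1) and irr = assms(2) and N = assms(3) and p = assms(4) and n = assms(5)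
    and mu = assms(6) and lenAs = assms(7) and setAs = assms(8) and xs0 = assms(9) and hyp = assms(10)
  define \<rho> where "\<rho> = jsr N \<A>"
  have rho0: "0 \<le> \<rho>" unfolding \<rho>_def by (rule jsr_nonneg)
  have lenfilt: "filterlim (\<lambda>k. length (H k)) at_top sequentially"
    if "\<And>k. Suc k \<le> length (H k)" for H :: "nat \<Rightarrow> (real^'d^'d) list"
    by (rule filterlim_at_top_mono[OF filterlim_Suc[unfolded filterlim_sequentially_Suc]])
       (use that in auto)
  show ?thesis
  proof (cases "\<rho> = 0")
    case True
    have "As \<noteq> []" using lenAs n by auto
    hence A0: "hd As \<in> \<A>" using setAs hd_in_set by blast
    define H where "H k = replicate (Suc k) (hd As)" for k
    show ?thesis
    proof (intro exI[of _ H] conjI allI)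
      fix k
      show "H k \<noteq> []" "set (H k) \<subseteq> \<A>" unfolding H_def using A0 by auto
      show "(\<mu> powr (1 / real (n + p)) * jsr N \<A>) ^ length (H k) \<le> opnorm N (mprod (H k))"
        using True opnorm_nonneg[OF N] unfolding H_def \<rho>_def by simp
    next
      show "filterlim (\<lambda>k. length (H k)) at_top sequentially" by (rule lenfilt) (simp add: H_def)
    qed
  next
    case False
    hence rho: "\<rho> > 0" using rho0 by simp
    define ch where "ch = chi N \<A> p"
    have ch0: "ch > 0" unfolding ch_def by (rule chi_pos[OF fin irr N p])
    define mx where "mx = max 1 (\<rho> ^ p)"
    have mx1: "1 \<le> mx" unfolding mx_def by simp
    define P where "P = mprod (rev As)"
    define y where "y = P *v xs"
    have Nxs: "N xs > 0" using isnD(1,2)[OF N, of xs] xs0 by auto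
    have hyp': "\<mu> * (mx / ch) * \<rho> ^ n * N xs \<le> N y"
      using hyp unfolding eta_p_def y_def P_def mx_def ch_def \<rho>_def .
    have "0 < \<mu> * (mx / ch) * \<rho> ^ n * N xs" using mu mx1 ch0 rho Nxs by simp
    hence Ny: "N y > 0" using hyp' by linarith
    define c where "c = ch * N y / N xs"
    have cge: "c \<ge> \<mu> * mx * \<rho> ^ n"
    proof -
      have "ch * (\<mu> * (mx / ch) * \<rho> ^ n * N xs) \<le> ch * N y" using hyp' ch0 by (intro mult_left_mono) auto
      hence "\<mu> * mx * \<rho> ^ n * N xs \<le> ch * N y" using ch0 by (simp add: field_simps)
      thus ?thesis unfolding c_def using Nxs by (simp add: field_simps)
    qed
    have c0: "c \<ge> 0" unfolding c_def using ch0 Ny Nxs by simp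
    define Lset where "Lset j = {Hs. set Hs \<subseteq> \<A> \<and> j * n \<le> length Hs \<and> length Hs \<le> j * (n + p)}" for j
    define V where "V j = (\<lambda>(\<sigma>::real, Hs). \<sigma> *\<^sub>R (mprod Hs *v xs)) ` ({1, -1} \<times> Lset j)" for j
    define v where "v = (1 / N y) *\<^sub>R y"
    have Nv: "N v = 1" unfolding v_def using isnD(3)[OF N] Ny by simp
    define w where "w = (ch / N xs) *\<^sub>R xs"
    have Nw: "N w = ch" unfolding w_def using isnD(3)[OF N] Nxs ch0 by simp
    have whull: "w \<in> hullset \<A> p v"
      by (rule ball_in_hullset[OF N fin ch0 _ ]) (use chi_le[OF N fin Nv] Nw in \<open>auto simp: ch_def\<close>)
    have base: "c *\<^sub>R xs \<in> convex hull (V 1)"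
    proof -
      have "c *\<^sub>R xs = N y *\<^sub>R w" unfolding w_def c_def using Nxs by (simp add: field_simps)
      also have "\<dots> \<in> convex hull (V 1)"
      proof (rule hull_lin[OF _ whull[unfolded hullset_def]])
        show "linear (\<lambda>z. N y *\<^sub>R z)" by (rule linear_scale_self)
        fix s assume "s \<in> (\<lambda>A. A *v v) ` prods_upto \<A> p \<union> (\<lambda>A. A *v - v) ` prods_upto \<A> p"
        then obtain A \<sigma> where A: "A \<in> prods_upto \<A> p" "\<sigma> \<in> {1, -1::real}" "s = \<sigma> *\<^sub>R (A *v v)"
          by (auto simp: mv_neg) (metis scaleR_one, metis scaleR_minus1_left)
        obtain Bs where Bs: "length Bs \<le> p" "set Bs \<subseteq> \<A>" "A = mprod Bs" using A(1) prods_upto_iff by blast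
        have "N y *\<^sub>R s = \<sigma> *\<^sub>R (mprod (Bs @ rev As) *v xs)"
          unfolding A(3) v_def Bs(3) y_def P_def using Ny[unfolded y_def P_def]
          by (simp add: mprod_append matrix_vector_mult_scaleR matrix_vector_mul_assoc)
        moreover have "Bs @ rev As \<in> Lset 1" unfolding Lset_def using Bs setAs lenAs by auto
        ultimately have "N y *\<^sub>R s \<in> V 1" unfolding V_def using A(2) by force
        thus "N y *\<^sub>R s \<in> convex hull (V 1)" by (rule hull_inc)
      qed
      finally show ?thesis .
    qed
    have ind: "c ^ k *\<^sub>R xs \<in> convex hull (V k)" for k
    proof (induction k)
      case 0
      have "[] \<in> Lset 0" unfolding Lset_def by simp
      hence "1 *\<^sub>R (mprod [] *v xs) \<in> V 0" unfolding V_def by force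
      thus ?case by (auto intro: hull_inc simp: matrix_vector_mul_lid)
    next
      case (Suc k)
      have "c ^ Suc k *\<^sub>R xs = c ^ k *\<^sub>R (c *\<^sub>R xs)" by simp
      also have "\<dots> \<in> convex hull (V (Suc k))"
      proof (rule hull_lin[OF _ base])
        show "linear (\<lambda>z. c ^ k *\<^sub>R z)" by (rule linear_scale_self)
        fix s assume "s \<in> V 1"
        then obtain \<sigma> Qs where Q: "\<sigma> \<in> {1, -1}" "Qs \<in> Lset 1" "s = \<sigma> *\<^sub>R (mprod Qs *v xs)"
          unfolding V_def by auto
        have "c ^ k *\<^sub>R s = (\<lambda>z. \<sigma> *\<^sub>R (mprod Qs *v z)) (c ^ k *\<^sub>R xs)"
          unfolding Q(3) by (simp add: matrix_vector_mult_scaleR)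
        also have "\<dots> \<in> convex hull (V (Suc k))"
        proof (rule hull_lin[OF _ Suc.IH])
          show "linear (\<lambda>z. \<sigma> *\<^sub>R (mprod Qs *v z))"
            by (rule bounded_linear.linear[OF bounded_linear_compose[OF bounded_linear_scaleR_right
                  matrix_vector_mul_bounded_linear]])
          fix t assume "t \<in> V k"
          then obtain \<tau> Hs where H: "\<tau> \<in> {1, -1}" "Hs \<in> Lset k" "t = \<tau> *\<^sub>R (mprod Hs *v xs)"
            unfolding V_def by auto
          have "\<sigma> *\<^sub>R (mprod Qs *v t) = (\<sigma> * \<tau>) *\<^sub>R (mprod (Qs @ Hs) *v xs)"
            unfolding H(3) by (simp add: mprod_append matrix_vector_mult_scaleR matrix_vector_mul_assoc)
          moreover have "\<sigma> * \<tau> \<in> {1, -1}" using Q(1) H(1) by auto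
          moreover have "Qs @ Hs \<in> Lset (Suc k)" using Q(2) H(2) unfolding Lset_def by auto
          ultimately have "\<sigma> *\<^sub>R (mprod Qs *v t) \<in> V (Suc k)" unfolding V_def by force
          thus "\<sigma> *\<^sub>R (mprod Qs *v t) \<in> convex hull (V (Suc k))" by (rule hull_inc)
        qed
        finally show "c ^ k *\<^sub>R s \<in> convex hull (V (Suc k))" .
      qed
      finally show ?case .
    qed
    have ex: "\<exists>Hs. Hs \<in> Lset j \<and> c ^ j \<le> opnorm N (mprod Hs)" for j
    proof -
      obtain s where s: "s \<in> V j" "N (c ^ j *\<^sub>R xs) \<le> N s" using conv_N[OF N ind[of j]] by blast
      then obtain \<sigma> Hs where H: "\<sigma> \<in> {1, -1}" "Hs \<in> Lset j" "s = \<sigma> *\<^sub>R (mprod Hs *v xs)"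
        unfolding V_def by auto
      have "N s = N (mprod Hs *v xs)" unfolding H(3) using isnD(3)[OF N] H(1) by auto
      moreover have "N (c ^ j *\<^sub>R xs) = c ^ j * N xs" using isnD(3)[OF N] c0 by simp
      ultimately have "c ^ j \<le> N (mprod Hs *v xs) / N xs" using s(2) Nxs by (simp add: field_simps)
      also have "\<dots> \<le> opnorm N (mprod Hs)" by (rule opnorm_ge[OF N xs0])
      finally show ?thesis using H(2) by blast
    qed
    define H where "H k = (SOME Hs. Hs \<in> Lset (Suc k) \<and> c ^ Suc k \<le> opnorm N (mprod Hs))" for k
    have HP: "H k \<in> Lset (Suc k) \<and> c ^ Suc k \<le> opnorm N (mprod (H k))" for k
      unfolding H_def by (rule someI_ex[OF ex])
    have lenH: "Suc k \<le> length (H k)" for k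
    proof -
      have "Suc k * n \<le> length (H k)" using HP[of k] unfolding Lset_def by simp
      moreover have "Suc k * 1 \<le> Suc k * n" using n by (intro mult_le_mono2)
      ultimately show ?thesis by simp
    qed
    show ?thesis
    proof (intro exI[of _ H] conjI allI)
      fix k
      show "H k \<noteq> []" using lenH[of k] by auto
      show "set (H k) \<subseteq> \<A>" using HP[of k] unfolding Lset_def by simp
      have "(\<mu> powr (1 / real (n + p)) * \<rho>) ^ length (H k) \<le> c ^ Suc k"
        using HP[of k] unfolding Lset_def
        by (intro arith_main[OF mu rho0 _ n]) (use cge in \<open>auto simp: mx_def\<close>)
      thus "(\<mu> powr (1 / real (n + p)) * jsr N \<A>) ^ length (H k) \<le> opnorm N (mprod (H k))"
        using HP[of k] unfolding \<rho>_def by linarith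
    next
      show "filterlim (\<lambda>k. length (H k)) at_top sequentially" by (rule lenfilt[OF lenH])
    qed
  qed
qed

end
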